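(* Let $f$ be an $(n-1)$-variable Boolean function and let $\bar f$ be the $n$-variable Boolean function $\bar f(x_1,\dots,x_n)=x_n+f(x_1,\dots,x_{n-1})$. Then $$\min({FAI}(f),{FAI}(1+f)+1)\le{FAI}(\bar f)\le\mathcal{FAI}(f)+2.$$
   Context: An $m$-variable Boolean function is a map $\mathbb{F}_2^m\to\mathbb{F}_2$, with algebraic degree $\deg$ the degree of its algebraic normal form. For $h$ an $m$-variable function, ${AN}^c(h)$ is the set of $g$ with $h\cdot g\neq0$, ${FAI}(h)$ is the minimum of $\deg(g)+\deg(h\cdot g)$ over $g\in{AN}^c(h)$, $g\neq 1$, and $\mathcal{FAI}(h)=\min({FAI}(h),{FAI}(1+h))$. *)

theory Defs
  imports Main "HOL-Library.Extended_Nat"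
begin

text \<open>Points of F_2^m are boolean lists of length m; an m-variable Boolean
function is a map bool list to bool, of which only the values on lists of
length m matter. Addition in F_2 is xor, multiplication is conjunction.\<close>

definition bvecs :: "nat \<Rightarrow> bool list set" where
  "bvecs m = {x. length x = m}"

definition supp :: "bool list \<Rightarrow> nat set" where
  "supp x = {i. i < length x \<and> x ! i}"

text \<open>ANF coefficient of the monomial prod_{i in S} x_i (Moebius transform):
a_S = sum over x with supp x subset of S of h x, in F_2.\<close>
definition anf_coeff :: "nat \<Rightarrow> (bool list \<Rightarrow> bool) \<Rightarrow> nat set \<Rightarrow> bool" where
  "anf_coeff m h S = odd (card {x \<in> bvecs m. supp x \<subseteq> S \<and> h x})"

definition alg_deg :: "nat \<Rightarrow> (bool list \<Rightarrow> bool) \<Rightarrow> nat" where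
  "alg_deg m h = Max (insert 0 {card S | S. S \<subseteq> {..<m} \<and> anf_coeff m h S})"

definition bprod :: "(bool list \<Rightarrow> bool) \<Rightarrow> (bool list \<Rightarrow> bool) \<Rightarrow> bool list \<Rightarrow> bool" where
  "bprod h g = (\<lambda>x. h x \<and> g x)"

definition bcompl :: "(bool list \<Rightarrow> bool) \<Rightarrow> bool list \<Rightarrow> bool" where
  "bcompl h = (\<lambda>x. \<not> h x)"   \<comment> \<open>1 + h\<close>

definition ANc :: "nat \<Rightarrow> (bool list \<Rightarrow> bool) \<Rightarrow> (bool list \<Rightarrow> bool) set" where
  "ANc m h = {g. \<exists>x\<in>bvecs m. bprod h g x}"

text \<open>FAI(h) = min { deg g + deg (h g) | g in AN^c(h), g \<noteq> 1 }; min of the empty set is infinity.\<close>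
definition FAI :: "nat \<Rightarrow> (bool list \<Rightarrow> bool) \<Rightarrow> enat" where
  "FAI m h = Inf {enat (alg_deg m g + alg_deg m (bprod h g)) | g.
                   g \<in> ANc m h \<and> \<not> (\<forall>x\<in>bvecs m. g x)}"

definition FAIcal :: "nat \<Rightarrow> (bool list \<Rightarrow> bool) \<Rightarrow> enat" where
  "FAIcal m h = min (FAI m h) (FAI m (bcompl h))"

text \<open>fbar(x_1,...,x_n) = x_n + f(x_1,...,x_{n-1}), with n = m + 1.\<close>
definition fbar :: "nat \<Rightarrow> (bool list \<Rightarrow> bool) \<Rightarrow> bool list \<Rightarrow> bool" where
  "fbar m f = (\<lambda>x. (x ! m) \<noteq> f (take m x))"

end

theory Submission
  imports Defs
begin

lemma finite_bvecs: "finite (bvecs m)"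
proof -
  have "bvecs m = {xs. set xs \<subseteq> UNIV \<and> length xs = m}" by (auto simp: bvecs_def)
  thus ?thesis using finite_lists_length_eq[of "UNIV::bool set" m] by simp
qed

lemma supp_snoc: "supp (x @ [b]) = supp x \<union> (if b then {length x} else {})"
  by (auto simp: supp_def nth_append less_Suc_eq)

lemma supp_bound: "supp x \<subseteq> {..<length x}"
  by (auto simp: supp_def)

lemma finite_supp: "finite (supp x)"
  using supp_bound finite_subset by blast

lemma supp_inj: "length x = length y \<Longrightarrow> supp x = supp y \<Longrightarrow> x = y"
  by (rule nth_equalityI) (auto simp: supp_def set_eq_iff)

lemma bvecs_Suc_cases:
  assumes "z \<in> bvecs (Suc m)"
  obtains x b where "x \<in> bvecs m" "z = x @ [b]"
proof -
  have "z = take m z @ [z ! m]" using assms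
    by (simp add: bvecs_def) (metis Suc_le_eq le_refl take_Suc_conv_app_nth take_all)
  moreover have "take m z \<in> bvecs m" using assms by (simp add: bvecs_def)
  ultimately show ?thesis using that by blast
qed

lemma snoc_in_bvecs[simp]: "(x @ [b] \<in> bvecs (Suc m)) = (x \<in> bvecs m)"
  by (auto simp: bvecs_def)

lemma card_split:
  fixes P :: "bool list \<Rightarrow> bool"
  shows "card {z\<in>bvecs (Suc m). supp z \<subseteq> S \<and> P z} =
    card {x\<in>bvecs m. supp x \<subseteq> S - {m} \<and> P (x@[False])} +
    (if m \<in> S then card {x\<in>bvecs m. supp x \<subseteq> S - {m} \<and> P (x@[True])} else 0)"
proof -
  define A0 where "A0 = {x\<in>bvecs m. supp x \<subseteq> S - {m} \<and> P (x@[False])}"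
  define A1 where "A1 = (if m \<in> S then {x\<in>bvecs m. supp x \<subseteq> S - {m} \<and> P (x@[True])} else {})"
  have eq: "{z\<in>bvecs (Suc m). supp z \<subseteq> S \<and> P z} = (\<lambda>x. x@[False]) ` A0 \<union> (\<lambda>x. x@[True]) ` A1"
  proof (rule set_eqI, rule iffI)
    fix z assume z: "z \<in> {z\<in>bvecs (Suc m). supp z \<subseteq> S \<and> P z}"
    then obtain x b where x: "x \<in> bvecs m" "z = x @ [b]" using bvecs_Suc_cases by blast
    have lx: "length x = m" using x by (simp add: bvecs_def)
    have "m \<notin> supp x" using supp_bound[of x] lx by auto
    then show "z \<in> (\<lambda>x. x@[False]) ` A0 \<union> (\<lambda>x. x@[True]) ` A1"
      using z x lx by (cases b) (auto simp: A0_def A1_def supp_snoc)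
  next
    fix z assume "z \<in> (\<lambda>x. x@[False]) ` A0 \<union> (\<lambda>x. x@[True]) ` A1"
    then show "z \<in> {z\<in>bvecs (Suc m). supp z \<subseteq> S \<and> P z}"
      by (auto simp: A0_def A1_def supp_snoc bvecs_def split: if_splits)
  qed
  have fin: "finite A0" "finite A1" using finite_bvecs by (auto simp: A0_def A1_def)
  have "card ((\<lambda>x. x@[False]) ` A0 \<union> (\<lambda>x. x@[True]) ` A1) = card ((\<lambda>x. x@[False]) ` A0) + card ((\<lambda>x. x@[True]) ` A1)"
    by (rule card_Un_disjoint) (use fin in auto)
  also have "\<dots> = card A0 + card A1"
    by (simp add: card_image inj_on_def)
  finally show ?thesis using eq by (simp add: A0_def A1_def)
qed

lemma card_all: "S \<subseteq> {..<m} \<Longrightarrow> card {x\<in>bvecs m. supp x \<subseteq> S} = 2 ^ card S"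
proof (induction m arbitrary: S)
  case 0
  then have "S = {}" by auto
  moreover have "{x\<in>bvecs 0. supp x \<subseteq> {}} = {[]}" by (auto simp: bvecs_def supp_def)
  ultimately show ?case by simp
next
  case (Suc m)
  have sub: "S - {m} \<subseteq> {..<m}" using Suc.prems by auto
  have fin: "finite S" using Suc.prems finite_subset by blast
  have "card {z\<in>bvecs (Suc m). supp z \<subseteq> S} = card {z\<in>bvecs (Suc m). supp z \<subseteq> S \<and> True}" by simp
  also have "\<dots> = 2 ^ card (S - {m}) + (if m \<in> S then 2 ^ card (S - {m}) else 0)"
    unfolding card_split using Suc.IH[OF sub] by simp
  also have "\<dots> = 2 ^ card S"
  proof (cases "m \<in> S")
    case True
    then have "card S = Suc (card (S - {m}))" using fin by (metis card_Suc_Diff1)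
    then show ?thesis using True by (metis mult_2 power_Suc)
  qed simp
  finally show ?case .
qed

lemma fin_degset: "finite {card S | S. S \<subseteq> {..<m} \<and> anf_coeff m h S}"
proof -
  have "{card S | S. S \<subseteq> {..<m} \<and> anf_coeff m h S} \<subseteq> card ` Pow {..<m}" by auto
  thus ?thesis using finite_subset by blast
qed

lemma deg_ge: "S \<subseteq> {..<m} \<Longrightarrow> anf_coeff m h S \<Longrightarrow> card S \<le> alg_deg m h"
  unfolding alg_deg_def using fin_degset[of m h] by (intro Max_ge) auto

lemma deg_le: "(\<And>S. S \<subseteq> {..<m} \<Longrightarrow> anf_coeff m h S \<Longrightarrow> card S \<le> d) \<Longrightarrow> alg_deg m h \<le> d"
  unfolding alg_deg_def using fin_degset[of m h] by (subst Max_le_iff) auto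

lemma deg_att:
  assumes "S0 \<subseteq> {..<m}" "anf_coeff m h S0"
  shows "\<exists>S\<subseteq>{..<m}. anf_coeff m h S \<and> card S = alg_deg m h"
proof -
  have "alg_deg m h \<in> insert 0 {card S | S. S \<subseteq> {..<m} \<and> anf_coeff m h S}"
    unfolding alg_deg_def using fin_degset[of m h] by (intro Max_in) auto
  moreover have "card S0 \<le> alg_deg m h" using deg_ge assms by blast
  ultimately show ?thesis using assms by auto
qed

lemma deg_cong: "(\<And>x. x \<in> bvecs m \<Longrightarrow> h x = h' x) \<Longrightarrow> alg_deg m h = alg_deg m h'"
proof -
  assume a: "\<And>x. x \<in> bvecs m \<Longrightarrow> h x = h' x"
  have "anf_coeff m h = anf_coeff m h'"
  proof
    fix S
    have "{x \<in> bvecs m. supp x \<subseteq> S \<and> h x} = {x \<in> bvecs m. supp x \<subseteq> S \<and> h' x}" using a by auto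
    thus "anf_coeff m h S = anf_coeff m h' S" by (simp add: anf_coeff_def)
  qed
  thus ?thesis by (simp add: alg_deg_def)
qed

definition Y0 :: "nat \<Rightarrow> (bool list \<Rightarrow> bool) \<Rightarrow> bool list \<Rightarrow> bool" where
  "Y0 m h = (\<lambda>z. \<not> z ! m \<and> h (take m z))"
definition Y1 :: "nat \<Rightarrow> (bool list \<Rightarrow> bool) \<Rightarrow> bool list \<Rightarrow> bool" where
  "Y1 m h = (\<lambda>z. z ! m \<and> h (take m z))"
definition R0 :: "(bool list \<Rightarrow> bool) \<Rightarrow> bool list \<Rightarrow> bool" where
  "R0 H = (\<lambda>x. H (x @ [False]))"
definition R1 :: "(bool list \<Rightarrow> bool) \<Rightarrow> bool list \<Rightarrow> bool" where
  "R1 H = (\<lambda>x. H (x @ [True]))"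

lemma anf_Y0: "anf_coeff (Suc m) (Y0 m h) S = anf_coeff m h (S - {m})"
proof -
  have e1: "{x\<in>bvecs m. supp x \<subseteq> S - {m} \<and> Y0 m h (x@[False])} = {x\<in>bvecs m. supp x \<subseteq> S - {m} \<and> h x}"
    and e2: "{x\<in>bvecs m. supp x \<subseteq> S - {m} \<and> Y0 m h (x@[True])} = {}"
    by (auto simp: bvecs_def Y0_def)
  show ?thesis unfolding anf_coeff_def card_split e1 e2 by simp
qed

lemma anf_Y1: "anf_coeff (Suc m) (Y1 m h) S = (m \<in> S \<and> anf_coeff m h (S - {m}))"
proof -
  have e1: "{x\<in>bvecs m. supp x \<subseteq> S - {m} \<and> Y1 m h (x@[True])} = {x\<in>bvecs m. supp x \<subseteq> S - {m} \<and> h x}"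
    and e2: "{x\<in>bvecs m. supp x \<subseteq> S - {m} \<and> Y1 m h (x@[False])} = {}"
    by (auto simp: bvecs_def Y1_def)
  show ?thesis unfolding anf_coeff_def card_split e1 e2 by simp
qed

lemma anf_R0: "S \<subseteq> {..<m} \<Longrightarrow> anf_coeff m (R0 H) S = anf_coeff (Suc m) H S"
  unfolding anf_coeff_def card_split R0_def by (auto simp: Diff_triv)

lemma anf_R1: "S \<subseteq> {..<m} \<Longrightarrow> anf_coeff m (R1 H) S = (anf_coeff (Suc m) H (insert m S) \<noteq> anf_coeff (Suc m) H S)"
proof -
  assume S: "S \<subseteq> {..<m}"
  then have mS: "m \<notin> S" by auto
  have e: "insert m S - {m} = S" "S - {m} = S" using mS by auto
  show ?thesis unfolding anf_coeff_def card_split R1_def using mS e by auto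
qed

lemma deg_Y0_le: "alg_deg (Suc m) (Y0 m h) \<le> alg_deg m h + 1"
proof (rule deg_le)
  fix S assume S: "S \<subseteq> {..<Suc m}" "anf_coeff (Suc m) (Y0 m h) S"
  then have "card (S - {m}) \<le> alg_deg m h" by (intro deg_ge) (auto simp: anf_Y0)
  moreover have "card S \<le> card (S - {m}) + 1"
    using finite_subset[OF S(1)] by (simp add: card_Diff_singleton_if; linarith)
  ultimately show "card S \<le> alg_deg m h + 1" by simp
qed

lemma deg_Y1_le: "alg_deg (Suc m) (Y1 m h) \<le> alg_deg m h + 1"
proof (rule deg_le)
  fix S assume S: "S \<subseteq> {..<Suc m}" "anf_coeff (Suc m) (Y1 m h) S"
  then have "card (S - {m}) \<le> alg_deg m h" by (intro deg_ge) (auto simp: anf_Y1)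
  moreover have "card S \<le> card (S - {m}) + 1"
    using finite_subset[OF S(1)] by (simp add: card_Diff_singleton_if; linarith)
  ultimately show "card S \<le> alg_deg m h + 1" by simp
qed

lemma deg_Y0_ge:
  assumes "S0 \<subseteq> {..<m}" "anf_coeff m h S0"
  shows "alg_deg m h + 1 \<le> alg_deg (Suc m) (Y0 m h)"
proof -
  obtain S where S: "S \<subseteq> {..<m}" "anf_coeff m h S" "card S = alg_deg m h" using deg_att[OF assms] by blast
  have mS: "m \<notin> S" using S by auto
  have "card (insert m S) \<le> alg_deg (Suc m) (Y0 m h)"
    by (rule deg_ge) (use S mS in \<open>auto simp: anf_Y0\<close>)
  thus ?thesis using S mS finite_subset[OF S(1)] by simp
qed

lemma deg_Y1_ge:
  assumes "S0 \<subseteq> {..<m}" "anf_coeff m h S0"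
  shows "alg_deg m h + 1 \<le> alg_deg (Suc m) (Y1 m h)"
proof -
  obtain S where S: "S \<subseteq> {..<m}" "anf_coeff m h S" "card S = alg_deg m h" using deg_att[OF assms] by blast
  have mS: "m \<notin> S" using S by auto
  have "card (insert m S) \<le> alg_deg (Suc m) (Y1 m h)"
    by (rule deg_ge) (use S mS in \<open>auto simp: anf_Y1\<close>)
  thus ?thesis using S mS finite_subset[OF S(1)] by simp
qed

lemma deg_R0_le: "alg_deg m (R0 H) \<le> alg_deg (Suc m) H"
proof (rule deg_le)
  fix S assume S: "S \<subseteq> {..<m}" "anf_coeff m (R0 H) S"
  show "card S \<le> alg_deg (Suc m) H" by (rule deg_ge) (use S in \<open>auto simp: anf_R0\<close>)
qed

lemma deg_R1_le: "alg_deg m (R1 H) \<le> alg_deg (Suc m) H"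
proof (rule deg_le)
  fix S assume S: "S \<subseteq> {..<m}" "anf_coeff m (R1 H) S"
  have fin: "finite S" using S finite_subset by blast
  show "card S \<le> alg_deg (Suc m) H"
  proof (cases "anf_coeff (Suc m) H S")
    case True
    then show ?thesis by (intro deg_ge) (use S in auto)
  next
    case False
    then have "anf_coeff (Suc m) H (insert m S)" using S anf_R1 by blast
    then have "card (insert m S) \<le> alg_deg (Suc m) H" by (intro deg_ge) (use S in auto)
    moreover have "card S \<le> card (insert m S)" using fin by (simp add: card_insert_le)
    ultimately show ?thesis by simp
  qed
qed


lemma zero_in_bvecs: "replicate m False \<in> bvecs m" by (simp add: bvecs_def)
lemma supp_zero: "supp (replicate m False) = {}" by (simp add: supp_def)

lemma supp_empty_zero: "x \<in> bvecs m \<Longrightarrow> supp x = {} \<Longrightarrow> x = replicate m False"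
  by (rule supp_inj) (auto simp: bvecs_def supp_zero)

lemma anf_compl:
  assumes S: "S \<subseteq> {..<m}" "S \<noteq> {}"
  shows "anf_coeff m (bcompl h) S = anf_coeff m h S"
proof -
  have fin: "finite S" using S finite_subset by blast
  let ?A = "{x\<in>bvecs m. supp x \<subseteq> S \<and> \<not> h x}" and ?B = "{x\<in>bvecs m. supp x \<subseteq> S \<and> h x}"
  have "{x\<in>bvecs m. supp x \<subseteq> S} = ?A \<union> ?B" by auto
  then have "card ?A + card ?B = 2 ^ card S"
    using card_all[OF S(1)] finite_bvecs by (subst card_Un_disjoint[symmetric]) auto
  moreover have "card S \<noteq> 0" using fin S by simp
  ultimately have "even (card ?A + card ?B)" by simp
  thus ?thesis unfolding anf_coeff_def bcompl_def by auto
qed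

lemma deg_compl_le: "alg_deg m (bcompl h) \<le> alg_deg m h"
proof (rule deg_le)
  fix S assume S: "S \<subseteq> {..<m}" "anf_coeff m (bcompl h) S"
  show "card S \<le> alg_deg m h"
  proof (cases "S = {}")
    case False
    then show ?thesis using S anf_compl deg_ge by metis
  qed simp
qed

lemma deg_compl: "alg_deg m (bcompl h) = alg_deg m h"
proof -
  have "alg_deg m (bcompl (bcompl h)) \<le> alg_deg m (bcompl h)" by (rule deg_compl_le)
  moreover have "bcompl (bcompl h) = h" by (simp add: bcompl_def)
  ultimately show ?thesis using deg_compl_le[of m h] by simp
qed

lemma exists_coeff_nz:
  assumes "\<not> h (replicate m False)" "x \<in> bvecs m" "h x"
  shows "\<exists>S\<subseteq>{..<m}. S \<noteq> {} \<and> anf_coeff m h S"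
proof -
  define P where "P n = (\<exists>x\<in>bvecs m. h x \<and> card (supp x) = n)" for n
  have "P (card (supp x))" using assms by (auto simp: P_def)
  then have "P (LEAST n. P n)" by (rule LeastI)
  then obtain x0 where x0: "x0 \<in> bvecs m" "h x0" "card (supp x0) = (LEAST n. P n)" by (auto simp: P_def)
  have one: "{y\<in>bvecs m. supp y \<subseteq> supp x0 \<and> h y} = {x0}"
  proof (rule set_eqI, rule iffI)
    fix y assume y: "y \<in> {y\<in>bvecs m. supp y \<subseteq> supp x0 \<and> h y}"
    then have "P (card (supp y))" by (auto simp: P_def)
    then have "card (supp x0) \<le> card (supp y)" using x0 Least_le by metis
    then have "supp y = supp x0" using y finite_supp card_subset_eq by (metis (no_types, lifting) card_mono le_antisym mem_Collect_eq)
    then show "y \<in> {x0}" using y x0 supp_inj by (auto simp: bvecs_def)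
  qed (use x0 in auto)
  have ne: "supp x0 \<noteq> {}" using x0 assms(1) supp_empty_zero by metis
  have sub: "supp x0 \<subseteq> {..<m}" using x0 supp_bound by (auto simp: bvecs_def)
  show ?thesis using ne sub one by (intro exI[of _ "supp x0"]) (auto simp: anf_coeff_def)
qed

lemma exists_coeff:
  assumes "x \<in> bvecs m" "h x"
  shows "\<exists>S\<subseteq>{..<m}. anf_coeff m h S"
proof (cases "h (replicate m False)")
  case True
  have "{y\<in>bvecs m. supp y \<subseteq> {} \<and> h y} = {replicate m False}"
    using True supp_empty_zero zero_in_bvecs supp_zero by auto
  then show ?thesis by (intro exI[of _ "{}"]) (auto simp: anf_coeff_def)
next
  case False
  then show ?thesis using exists_coeff_nz assms by blast
qed

lemma deg_nonconst:
  assumes "x \<in> bvecs m" "y \<in> bvecs m" "h x" "\<not> h y"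
  shows "1 \<le> alg_deg m h"
proof -
  have "\<exists>S\<subseteq>{..<m}. S \<noteq> {} \<and> anf_coeff m h S"
  proof (cases "h (replicate m False)")
    case False
    then show ?thesis using exists_coeff_nz assms by blast
  next
    case True
    then have "\<exists>S\<subseteq>{..<m}. S \<noteq> {} \<and> anf_coeff m (bcompl h) S"
      using exists_coeff_nz[of "bcompl h" m y] assms by (auto simp: bcompl_def)
    then show ?thesis using anf_compl by metis
  qed
  then obtain S where S: "S \<subseteq> {..<m}" "S \<noteq> {}" "anf_coeff m h S" by blast
  then have "card S \<le> alg_deg m h" using deg_ge by blast
  moreover have "finite S" using S finite_subset by blast
  then have "card S \<noteq> 0" using S by simp
  ultimately show ?thesis by simp
qed

lemma deg_true: "alg_deg m (\<lambda>_. True) = 0"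
proof -
  have "alg_deg m (\<lambda>_. True) \<le> 0"
  proof (rule deg_le)
    fix S assume S: "S \<subseteq> {..<m}" "anf_coeff m (\<lambda>_. True) S"
    have "S = {}"
    proof (rule ccontr)
      assume "S \<noteq> {}"
      then have "anf_coeff m (bcompl (\<lambda>_. True)) S" using anf_compl S by metis
      then show False by (simp add: anf_coeff_def bcompl_def)
    qed
    then show "card S \<le> 0" by simp
  qed
  thus ?thesis by simp
qed


lemma FAI_leI:
  assumes "x \<in> bvecs m" "h x" "g x" "y \<in> bvecs m" "\<not> g y"
    "alg_deg m g + alg_deg m (bprod h g) \<le> d"
  shows "FAI m h \<le> enat d"
proof -
  have "FAI m h \<le> enat (alg_deg m g + alg_deg m (bprod h g))"
    unfolding FAI_def ANc_def using assms(1-5) by (intro Inf_lower) (auto simp: bprod_def)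
  also have "\<dots> \<le> enat d" using assms(6) by simp
  finally show ?thesis .
qed

lemma FAI_plus_bound:
  assumes "\<And>g. g \<in> ANc m h \<Longrightarrow> \<not> (\<forall>x\<in>bvecs m. g x) \<Longrightarrow> X \<le> enat (alg_deg m g + alg_deg m (bprod h g) + 2)"
  shows "X \<le> FAI m h + 2"
proof -
  define A where "A = {enat (alg_deg m g + alg_deg m (bprod h g)) | g. g \<in> ANc m h \<and> \<not> (\<forall>x\<in>bvecs m. g x)}"
  have F: "FAI m h = Inf A" by (simp add: FAI_def A_def)
  show ?thesis
  proof (cases "A = {}")
    case True
    then show ?thesis using F by (simp add: Inf_enat_def)
  next
    case False
    then obtain a where "a \<in> A" by blast
    then have "Inf A \<in> A" unfolding Inf_enat_def using False by (simp add: LeastI[of "\<lambda>x. x \<in> A" a])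
    then obtain g where g: "g \<in> ANc m h" "\<not> (\<forall>x\<in>bvecs m. g x)" "Inf A = enat (alg_deg m g + alg_deg m (bprod h g))"
      by (auto simp: A_def)
    have "X \<le> enat (alg_deg m g + alg_deg m (bprod h g) + 2)" using assms g by blast
    also have "\<dots> = Inf A + 2" using g(3) by (simp add: numeral_eq_enat)
    finally show ?thesis using F by simp
  qed
qed

lemma snoc_simps: "x \<in> bvecs m \<Longrightarrow> (x @ [b]) ! m = b" "x \<in> bvecs m \<Longrightarrow> take m (x @ [b]) = x"
  by (auto simp: bvecs_def)

lemma FAI_small:
  assumes "\<exists>x\<in>bvecs (Suc k). f x"
  shows "FAI (Suc k) f \<le> enat (alg_deg (Suc k) f + 2)"
proof -
  obtain z where z: "z \<in> bvecs (Suc k)" "f z" using assms by blast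
  then obtain x b where x: "x \<in> bvecs k" "z = x @ [b]" using bvecs_Suc_cases by blast
  have y: "replicate k False @ [\<not> b] \<in> bvecs (Suc k)" using zero_in_bvecs by simp
  show ?thesis
  proof (cases b)
    case True
    let ?g = "Y1 k (\<lambda>_. True)"
    have "alg_deg (Suc k) ?g \<le> 1" using deg_Y1_le[of k "\<lambda>_. True"] deg_true[of k] by simp
    moreover have "alg_deg (Suc k) (bprod f ?g) = alg_deg (Suc k) (Y1 k (R1 f))"
    proof (rule deg_cong)
      fix w assume "w \<in> bvecs (Suc k)"
      then obtain u c where "u \<in> bvecs k" "w = u @ [c]" using bvecs_Suc_cases by blast
      then show "bprod f ?g w = Y1 k (R1 f) w" by (auto simp: bprod_def Y1_def R1_def bvecs_def)
    qed
    moreover have "alg_deg (Suc k) (Y1 k (R1 f)) \<le> alg_deg (Suc k) f + 1"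
      using deg_Y1_le[of k "R1 f"] deg_R1_le[of k f] by simp
    ultimately show ?thesis
      using z x True y zero_in_bvecs
      by (intro FAI_leI[where x = z and y = "replicate k False @ [\<not> b]" and g = ?g]) (auto simp: Y1_def snoc_simps)
  next
    case False
    let ?g = "Y0 k (\<lambda>_. True)"
    have "alg_deg (Suc k) ?g \<le> 1" using deg_Y0_le[of k "\<lambda>_. True"] deg_true[of k] by simp
    moreover have "alg_deg (Suc k) (bprod f ?g) = alg_deg (Suc k) (Y0 k (R0 f))"
    proof (rule deg_cong)
      fix w assume "w \<in> bvecs (Suc k)"
      then obtain u c where "u \<in> bvecs k" "w = u @ [c]" using bvecs_Suc_cases by blast
      then show "bprod f ?g w = Y0 k (R0 f) w" by (auto simp: bprod_def Y0_def R0_def bvecs_def)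
    qed
    moreover have "alg_deg (Suc k) (Y0 k (R0 f)) \<le> alg_deg (Suc k) f + 1"
      using deg_Y0_le[of k "R0 f"] deg_R0_le[of k f] by simp
    ultimately show ?thesis
      using z x False y zero_in_bvecs
      by (intro FAI_leI[where x = z and y = "replicate k False @ [\<not> b]" and g = ?g]) (auto simp: Y0_def snoc_simps)
  qed
qed


lemma upper1: "FAI (Suc m) (fbar m f) \<le> FAI m f + 2"
proof (rule FAI_plus_bound)
  fix g assume g: "g \<in> ANc m f" "\<not> (\<forall>x\<in>bvecs m. g x)"
  obtain x where x: "x \<in> bvecs m" "f x" "g x" using g(1) by (auto simp: ANc_def bprod_def)
  let ?G = "Y0 m g"
  have d1: "alg_deg (Suc m) ?G \<le> alg_deg m g + 1" by (rule deg_Y0_le)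
  have "alg_deg (Suc m) (bprod (fbar m f) ?G) = alg_deg (Suc m) (Y0 m (bprod f g))"
  proof (rule deg_cong)
    fix w assume "w \<in> bvecs (Suc m)"
    then obtain u c where "u \<in> bvecs m" "w = u @ [c]" using bvecs_Suc_cases by blast
    then show "bprod (fbar m f) ?G w = Y0 m (bprod f g) w" by (auto simp: bprod_def Y0_def fbar_def bvecs_def)
  qed
  then have d2: "alg_deg (Suc m) (bprod (fbar m f) ?G) \<le> alg_deg m (bprod f g) + 1"
    using deg_Y0_le[of m "bprod f g"] by simp
  have "FAI (Suc m) (fbar m f) \<le> enat (alg_deg m g + alg_deg m (bprod f g) + 2)"
    using x zero_in_bvecs d1 d2
    by (intro FAI_leI[where x = "x @ [False]" and y = "replicate m False @ [True]" and g = ?G])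
       (auto simp: Y0_def fbar_def bvecs_def nth_append)
  then show "FAI (Suc m) (fbar m f) \<le> enat (alg_deg m g + alg_deg m (bprod f g) + 2)" .
qed

lemma upper2: "FAI (Suc m) (fbar m f) \<le> FAI m (bcompl f) + 2"
proof (rule FAI_plus_bound)
  fix g assume g: "g \<in> ANc m (bcompl f)" "\<not> (\<forall>x\<in>bvecs m. g x)"
  obtain x where x: "x \<in> bvecs m" "\<not> f x" "g x" using g(1) by (auto simp: ANc_def bprod_def bcompl_def)
  let ?G = "Y1 m g"
  have d1: "alg_deg (Suc m) ?G \<le> alg_deg m g + 1" by (rule deg_Y1_le)
  have "alg_deg (Suc m) (bprod (fbar m f) ?G) = alg_deg (Suc m) (Y1 m (bprod (bcompl f) g))"
  proof (rule deg_cong)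
    fix w assume "w \<in> bvecs (Suc m)"
    then obtain u c where "u \<in> bvecs m" "w = u @ [c]" using bvecs_Suc_cases by blast
    then show "bprod (fbar m f) ?G w = Y1 m (bprod (bcompl f) g) w" by (auto simp: bprod_def Y1_def fbar_def bvecs_def bcompl_def)
  qed
  then have d2: "alg_deg (Suc m) (bprod (fbar m f) ?G) \<le> alg_deg m (bprod (bcompl f) g) + 1"
    using deg_Y1_le[of m "bprod (bcompl f) g"] by simp
  have "FAI (Suc m) (fbar m f) \<le> enat (alg_deg m g + alg_deg m (bprod (bcompl f) g) + 2)"
    using x zero_in_bvecs d1 d2
    by (intro FAI_leI[where x = "x @ [True]" and y = "replicate m False @ [False]" and g = ?G])
       (auto simp: Y1_def fbar_def bvecs_def nth_append)
  then show "FAI (Suc m) (fbar m f) \<le> enat (alg_deg m g + alg_deg m (bprod (bcompl f) g) + 2)" .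
qed


lemma min_helper:
  assumes "a \<le> enat n \<or> (\<exists>d. b \<le> enat d \<and> d + 1 \<le> n)"
  shows "min a (b + 1) \<le> (enat n :: enat)"
  using assms
proof
  assume "a \<le> enat n" then show ?thesis by (simp add: min.coboundedI1)
next
  assume "\<exists>d. b \<le> enat d \<and> d + 1 \<le> n"
  then obtain d where d: "b \<le> enat d" "d + 1 \<le> n" by blast
  have "b + 1 \<le> enat d + 1" using d(1) by (rule add_right_mono)
  also have "\<dots> = enat (d + 1)" by (simp add: one_enat_def)
  also have "\<dots> \<le> enat n" using d(2) by simp
  finally show ?thesis by (simp add: min.coboundedI2)
qed

lemma lower:
  assumes m: "m = Suc k" and fnz: "\<exists>x\<in>bvecs m. f x"
  shows "min (FAI m f) (FAI m (bcompl f) + 1) \<le> FAI (Suc m) (fbar m f)"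
  unfolding FAI_def[of "Suc m" "fbar m f"]
proof (rule Inf_greatest)
  fix v assume "v \<in> {enat (alg_deg (Suc m) G + alg_deg (Suc m) (bprod (fbar m f) G)) | G.
                   G \<in> ANc (Suc m) (fbar m f) \<and> \<not> (\<forall>x\<in>bvecs (Suc m). G x)}"
  then obtain G where G: "G \<in> ANc (Suc m) (fbar m f)" "\<not> (\<forall>z\<in>bvecs (Suc m). G z)"
    and v: "v = enat (alg_deg (Suc m) G + alg_deg (Suc m) (bprod (fbar m f) G))" by blast
  define H where "H = bprod (fbar m f) G"
  define dG where "dG = alg_deg (Suc m) G"
  define dH where "dH = alg_deg (Suc m) H"
  have v': "v = enat (dG + dH)" using v by (simp add: dG_def dH_def H_def)
  obtain z where z: "z \<in> bvecs (Suc m)" "H z" using G(1) by (auto simp: ANc_def H_def)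
  obtain w where w: "w \<in> bvecs (Suc m)" "\<not> G w" using G(2) by blast
  have dG1: "1 \<le> dG" unfolding dG_def
    by (rule deg_nonconst[OF z(1) w(1)]) (use z w in \<open>auto simp: H_def bprod_def\<close>)
  have Fb: "FAI m f \<le> enat (alg_deg m f + 2)" using FAI_small fnz m by blast
  have hR0G: "alg_deg m (R0 G) \<le> dG" unfolding dG_def by (rule deg_R0_le)
  have hR1G: "alg_deg m (R1 G) \<le> dG" unfolding dG_def by (rule deg_R1_le)
  have "alg_deg m (bprod f (R0 G)) = alg_deg m (R0 H)"
    by (rule deg_cong) (auto simp: bprod_def R0_def H_def fbar_def bvecs_def nth_append)
  then have hH0: "alg_deg m (bprod f (R0 G)) \<le> dH" using deg_R0_le[of m H] by (simp add: dH_def)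
  have "alg_deg m (bprod (bcompl f) (R1 G)) = alg_deg m (R1 H)"
    by (rule deg_cong) (auto simp: bprod_def bcompl_def R1_def H_def fbar_def bvecs_def nth_append)
  then have hH1: "alg_deg m (bprod (bcompl f) (R1 G)) \<le> dH" using deg_R1_le[of m H] by (simp add: dH_def)
  have "FAI m f \<le> enat (dG + dH) \<or> (\<exists>d. FAI m (bcompl f) \<le> enat d \<and> d + 1 \<le> dG + dH)"
  proof (cases "(\<exists>x\<in>bvecs m. f x \<and> R0 G x) \<and> (\<exists>y\<in>bvecs m. \<not> R0 G y)")
    case True
    then obtain x y where xy: "x \<in> bvecs m" "f x" "R0 G x" "y \<in> bvecs m" "\<not> R0 G y" by blast
    have "FAI m f \<le> enat (dG + dH)"
      by (rule FAI_leI[where h=f and g="R0 G", OF xy]) (use hR0G hH0 in simp)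
    then show ?thesis by blast
  next
    case c: False
    show ?thesis
    proof (cases "\<exists>x\<in>bvecs m. f x \<and> R0 G x")
      case False
      have "dH = alg_deg (Suc m) (Y1 m (R1 H))" unfolding dH_def
      proof (rule deg_cong)
        fix u assume "u \<in> bvecs (Suc m)"
        then obtain x c where x: "x \<in> bvecs m" "u = x @ [c]" using bvecs_Suc_cases by blast
        then show "H u = Y1 m (R1 H) u" using False
          by (cases c) (auto simp: H_def bprod_def fbar_def Y1_def R1_def R0_def bvecs_def nth_append)
      qed
      moreover obtain x c where x: "x \<in> bvecs m" "z = x @ [c]" using z bvecs_Suc_cases by blast
      have c: "c" using False x z by (cases c) (auto simp: H_def bprod_def fbar_def R0_def bvecs_def nth_append)
      have R1Hx: "R1 H x" using x z c by (simp add: R1_def)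
      ultimately have dH1: "alg_deg m (R1 H) + 1 \<le> dH"
        using exists_coeff[where h="R1 H", OF x(1) R1Hx] deg_Y1_ge by metis
      have fx: "\<not> f x" "R1 G x" using R1Hx x by (auto simp: R1_def H_def bprod_def fbar_def bvecs_def nth_append)
      show ?thesis
      proof (cases "\<exists>y\<in>bvecs m. \<not> R1 G y")
        case True
        then obtain y where y: "y \<in> bvecs m" "\<not> R1 G y" by blast
        have "FAI m (bcompl f) \<le> enat (alg_deg m (R1 G) + alg_deg m (bprod (bcompl f) (R1 G)))"
          by (rule FAI_leI[where h="bcompl f" and g="R1 G", OF x(1) _ fx(2) y]) (use fx in \<open>simp_all add: bcompl_def\<close>)
        moreover have "alg_deg m (R1 G) + alg_deg m (bprod (bcompl f) (R1 G)) + 1 \<le> dG + dH"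
          using hR1G dH1 \<open>alg_deg m (bprod (bcompl f) (R1 G)) = alg_deg m (R1 H)\<close> by simp
        ultimately show ?thesis by blast
      next
        case False
        have "alg_deg m (R1 H) = alg_deg m (bcompl f)"
          by (rule deg_cong) (use False in \<open>auto simp: R1_def H_def bprod_def fbar_def bcompl_def bvecs_def nth_append\<close>)
        then have "alg_deg m f + 2 \<le> dG + dH" using dH1 dG1 deg_compl[of m f] by simp
        then show ?thesis using Fb by (meson enat_ord_simps(1) order_trans)
      qed
    next
      case True
      then have allR0: "\<forall>y\<in>bvecs m. R0 G y" using c by blast
      have "dG = alg_deg (Suc m) (bcompl G)" unfolding dG_def using deg_compl by metis
      also have "\<dots> = alg_deg (Suc m) (Y1 m (bcompl (R1 G)))"
      proof (rule deg_cong)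
        fix u assume "u \<in> bvecs (Suc m)"
        then obtain x c where x: "x \<in> bvecs m" "u = x @ [c]" using bvecs_Suc_cases by blast
        then show "bcompl G u = Y1 m (bcompl (R1 G)) u" using allR0
          by (cases c) (auto simp: bcompl_def Y1_def R1_def R0_def bvecs_def nth_append)
      qed
      finally have dGeq: "dG = alg_deg (Suc m) (Y1 m (bcompl (R1 G)))" .
      obtain y c where y: "y \<in> bvecs m" "w = y @ [c]" using w bvecs_Suc_cases by blast
      have c: "c" using allR0 y w by (cases c) (auto simp: R0_def)
      have ny: "\<not> R1 G y" using y w c by (simp add: R1_def)
      have "alg_deg m (bcompl (R1 G)) + 1 \<le> dG"
        using exists_coeff[OF y(1), of "bcompl (R1 G)"] ny deg_Y1_ge dGeq by (metis bcompl_def)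
      then have dG2: "alg_deg m (R1 G) + 1 \<le> dG" using deg_compl by metis
      show ?thesis
      proof (cases "\<exists>x\<in>bvecs m. \<not> f x \<and> R1 G x")
        case True
        then obtain x where x: "x \<in> bvecs m" "\<not> f x" "R1 G x" by blast
        have "FAI m (bcompl f) \<le> enat (alg_deg m (R1 G) + alg_deg m (bprod (bcompl f) (R1 G)))"
          by (rule FAI_leI[where h="bcompl f" and g="R1 G", OF x(1) _ x(3) y(1) ny]) (use x in \<open>simp_all add: bcompl_def\<close>)
        moreover have "alg_deg m (R1 G) + alg_deg m (bprod (bcompl f) (R1 G)) + 1 \<le> dG + dH"
          using dG2 hH1 by simp
        ultimately show ?thesis by blast
      next
        case False
        have "dH = alg_deg (Suc m) (Y0 m f)" unfolding dH_def
        proof (rule deg_cong)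
          fix u assume "u \<in> bvecs (Suc m)"
          then obtain x c where x: "x \<in> bvecs m" "u = x @ [c]" using bvecs_Suc_cases by blast
          then show "H u = Y0 m f u" using False allR0
            by (cases c) (auto simp: H_def bprod_def fbar_def Y0_def R1_def R0_def bvecs_def nth_append)
        qed
        moreover obtain x0 where "x0 \<in> bvecs m" "f x0" using fnz by blast
        ultimately have "alg_deg m f + 1 \<le> dH" using exists_coeff deg_Y0_ge by metis
        then have "alg_deg m f + 2 \<le> dG + dH" using dG1 by simp
        then show ?thesis using Fb by (meson enat_ord_simps(1) order_trans)
      qed
    qed
  qed
  then show "min (FAI m f) (FAI m (bcompl f) + 1) \<le> v" unfolding v' by (rule min_helper)
qed

theorem corollary2:
  fixes f :: "bool list \<Rightarrow> bool" and m :: nat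
  assumes "m \<ge> 1"
    and "\<exists>x\<in>bvecs m. f x"
  shows "min (FAI m f) (FAI m (bcompl f) + 1) \<le> FAI (Suc m) (fbar m f)
         \<and> FAI (Suc m) (fbar m f) \<le> FAIcal m f + 2"
proof
  obtain k where k: "m = Suc k" using assms(1) by (cases m) auto
  show "min (FAI m f) (FAI m (bcompl f) + 1) \<le> FAI (Suc m) (fbar m f)"
    using lower[OF k assms(2)] .
  have u1: "FAI (Suc m) (fbar m f) \<le> FAI m f + 2" by (rule upper1)
  have u2: "FAI (Suc m) (fbar m f) \<le> FAI m (bcompl f) + 2" by (rule upper2)
  show "FAI (Suc m) (fbar m f) \<le> FAIcal m f + 2"
    unfolding FAIcal_def using u1 u2 by (cases "FAI m f \<le> FAI m (bcompl f)") (auto simp: min_def)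
qed

end
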